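(* Let $e\ge3$, let $A$ be an arm sequence and $n\in\mathbb N$, and let $y=\max\{A_t/t: t\in\{1,\dots,n\}\}$. Then $A_t=\lfloor yt\rfloor$ for $t=1,\dots,n$. Consequently $\mathcal R_A^{(n)}=\mathcal R_{A^{y+}}^{(n)}$.
   Context: An arm sequence is an integer sequence $A=(A_1,A_2,\dots)$ with $t-1\le A_t\le(e-1)t$ and $A_{t+u}\in\{A_t+A_u,A_t+A_u+1\}$ for all $t,u\ge1$. For real $y\in[1,e-1]$, $A^{y+}$ is the arm sequence $A^{y+}_t=\lfloor yt\rfloor$. $\mathcal R_A$ is the crystal whose vertices are the $A$-regular partitions (no hook of length $et$ and arm length $A_t$ for any $t\ge1$) with arrows $\lambda\xrightarrow{i}f_i\lambda$ defined by the $A$-dependent $i$-signature rule (for distinct $i$-nodes $(r,c),(s,d)$ with $s-r+c-d=et$, $t\ge0$ after swapping, $(r,c)\prec(s,d)$ iff $c-d\le A_t$, $A_0:=0$; addable/removable $i$-nodes in decreasing order give a $\pm$ word, adjacent $+-$ cancelled; $f_i$ adds the node of the first remaining $+$). $\mathcal R_A^{(n)}$ denotes the induced subgraph on partitions of size at most $ne$. *)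

theory Defs
  imports Main "HOL-Library.Multiset" Complex_Main
begin

text \<open>Sequences are functions on nat; the value at index 0 is ignored
  (indices t range over positive integers).\<close>

definition arm_seq :: "nat \<Rightarrow> (nat \<Rightarrow> int) \<Rightarrow> bool" where
  "arm_seq e A \<longleftrightarrow>
     (\<forall>t\<ge>1. int t - 1 \<le> A t \<and> A t \<le> (int e - 1) * int t) \<and>
     (\<forall>t u. t \<ge> 1 \<longrightarrow> u \<ge> 1 \<longrightarrow>
        A (t + u) = A t + A u \<or> A (t + u) = A t + A u + 1)"

text \<open>The sequence A^{y+}: t maps to floor(y t).\<close>
definition arm_floor :: "real \<Rightarrow> nat \<Rightarrow> int" where
  "arm_floor y t = \<lfloor>y * real t\<rfloor>"

definition Aext :: "(nat \<Rightarrow> int) \<Rightarrow> nat \<Rightarrow> int" where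
  "Aext A t = (if t = 0 then 0 else A t)"

definition young :: "(nat \<times> nat) set \<Rightarrow> bool" where
  "young D \<longleftrightarrow> finite D \<and>
     (\<forall>r c. (r, c) \<in> D \<longrightarrow> 1 \<le> r \<and> 1 \<le> c \<and>
        (\<forall>r' c'. 1 \<le> r' \<longrightarrow> r' \<le> r \<longrightarrow> 1 \<le> c' \<longrightarrow> c' \<le> c \<longrightarrow> (r', c') \<in> D))"

definition arm_len :: "(nat \<times> nat) set \<Rightarrow> nat \<times> nat \<Rightarrow> nat" where
  "arm_len D x = card {c'. (fst x, c') \<in> D \<and> c' > snd x}"

definition leg_len :: "(nat \<times> nat) set \<Rightarrow> nat \<times> nat \<Rightarrow> nat" where
  "leg_len D x = card {r'. (r', snd x) \<in> D \<and> r' > fst x}"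

definition hook_len :: "(nat \<times> nat) set \<Rightarrow> nat \<times> nat \<Rightarrow> nat" where
  "hook_len D x = arm_len D x + leg_len D x + 1"

definition regular :: "nat \<Rightarrow> (nat \<Rightarrow> int) \<Rightarrow> (nat \<times> nat) set \<Rightarrow> bool" where
  "regular e A D \<longleftrightarrow>
     (\<forall>x\<in>D. \<forall>t\<ge>1. \<not> (hook_len D x = e * t \<and> int (arm_len D x) = A t))"

definition addable :: "(nat \<times> nat) set \<Rightarrow> nat \<times> nat \<Rightarrow> bool" where
  "addable D x \<longleftrightarrow> x \<notin> D \<and> young (insert x D)"

definition removable :: "(nat \<times> nat) set \<Rightarrow> nat \<times> nat \<Rightarrow> bool" where
  "removable D x \<longleftrightarrow> x \<in> D \<and> young (D - {x})"

definition residue :: "nat \<Rightarrow> nat \<times> nat \<Rightarrow> int" where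
  "residue e x = (int (snd x) - int (fst x)) mod int e"

definition inodes :: "nat \<Rightarrow> (nat \<times> nat) set \<Rightarrow> nat \<Rightarrow> (nat \<times> nat) set" where
  "inodes e D i = {x. (addable D x \<or> removable D x) \<and> residue e x = int i}"

text \<open>For distinct i-nodes (r,c), (s,d) put k = s - r + c - d (a multiple of e).\<close>
definition prec :: "nat \<Rightarrow> (nat \<Rightarrow> int) \<Rightarrow> nat \<times> nat \<Rightarrow> nat \<times> nat \<Rightarrow> bool" where
  "prec e A x y \<longleftrightarrow> x \<noteq> y \<and>
     (let r = int (fst x); c = int (snd x); s = int (fst y); d = int (snd y);
          k = s - r + c - d
      in if k \<ge> 0 then c - d \<le> Aext A (nat (k div int e))
         else \<not> (d - c \<le> Aext A (nat ((- k) div int e))))"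

text \<open>A signed word: each entry is a node together with True (+, addable)
  or False (-, removable).\<close>
definition cancel1 :: "((nat \<times> nat) \<times> bool) list \<Rightarrow> ((nat \<times> nat) \<times> bool) list \<Rightarrow> bool" where
  "cancel1 w w' \<longleftrightarrow> (\<exists>u a b v. w = u @ [a, b] @ v \<and> snd a \<and> \<not> snd b \<and> w' = u @ v)"

definition reduced_word :: "((nat \<times> nat) \<times> bool) list \<Rightarrow> bool" where
  "reduced_word w \<longleftrightarrow> \<not> (\<exists>w'. cancel1 w w')"

definition sig_list :: "nat \<Rightarrow> (nat \<Rightarrow> int) \<Rightarrow> (nat \<times> nat) set \<Rightarrow> nat \<Rightarrow> (nat \<times> nat) list \<Rightarrow> bool" where
  "sig_list e A D i L \<longleftrightarrow> distinct L \<and> set L = inodes e D i \<and>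
     sorted_wrt (\<lambda>x y. prec e A y x) L"

text \<open>f_i D = D' : D' is D with the node of the first remaining + added.\<close>
definition crystal_arrow :: "nat \<Rightarrow> (nat \<Rightarrow> int) \<Rightarrow> (nat \<times> nat) set \<Rightarrow> nat \<Rightarrow> (nat \<times> nat) set \<Rightarrow> bool" where
  "crystal_arrow e A D i D' \<longleftrightarrow> i < e \<and>
     (\<exists>L w. sig_list e A D i L \<and>
        cancel1\<^sup>*\<^sup>* (map (\<lambda>x. (x, addable D x)) L) w \<and> reduced_word w \<and>
        (\<exists>u x v. w = u @ [(x, True)] @ v \<and> (\<forall>a\<in>set u. \<not> snd a) \<and> D' = insert x D))"

section \<open>The truncated crystal R_A^(n): induced subgraph on partitions of size <= n e\<close>

definition crystal_trunc :: "nat \<Rightarrow> (nat \<Rightarrow> int) \<Rightarrow> nat \<Rightarrow>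
    ((nat \<times> nat) set set \<times> ((nat \<times> nat) set \<times> nat \<times> (nat \<times> nat) set) set)" where
  "crystal_trunc e A n =
     (let V = {D. young D \<and> regular e A D \<and> card D \<le> n * e}
      in (V, {(D, i, D'). D \<in> V \<and> D' \<in> V \<and> crystal_arrow e A D i D'}))"

end

theory Submission
  imports Defs
begin


lemma arm_step:
  assumes "arm_seq e A" "t \<ge> 1" "u \<ge> 1"
  shows "A t + A u \<le> A (t + u) \<and> A (t + u) \<le> A t + A u + 1"
proof -
  have "A (t + u) = A t + A u \<or> A (t + u) = A t + A u + 1"
    using assms unfolding arm_seq_def by blast
  then show ?thesis by auto
qed

lemma arm_super:
  assumes "arm_seq e A" "s \<ge> 1"
  shows "k \<ge> 1 \<Longrightarrow> int k * A s \<le> A (k * s) \<and> A (k * s) + 1 \<le> int k * (A s + 1)"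
proof (induction k)
  case 0 then show ?case by simp
next
  case (Suc m)
  show ?case
  proof (cases "m = 0")
    case True then show ?thesis by simp
  next
    case False
    then have ms: "m * s \<ge> 1" using assms(2) by simp
    have eq: "Suc m * s = m * s + s" by simp
    have st: "A (m * s) + A s \<le> A (m * s + s) \<and> A (m * s + s) \<le> A (m * s) + A s + 1"
      using arm_step[OF assms(1) ms assms(2)] .
    have ih: "int m * A s \<le> A (m * s) \<and> A (m * s) + 1 \<le> int m * (A s + 1)"
      using Suc False by simp
    have e2: "int (Suc m) * A s = int m * A s + A s" "int (Suc m) * (A s + 1) = int m * (A s + 1) + (A s + 1)"
      by (simp_all add: algebra_simps)
    show ?thesis unfolding eq e2 using st ih by linarith
  qed
qed

lemma arm_key:
  assumes "arm_seq e A" "s \<ge> 1" "t \<ge> 1"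
  shows "int t * A s < int s * (A t + 1)"
proof -
  have "int t * A s \<le> A (t * s)" using arm_super[OF assms(1,2) assms(3)] by blast
  moreover have "A (s * t) + 1 \<le> int s * (A t + 1)" using arm_super[OF assms(1,3) assms(2)] by blast
  then have "A (t * s) + 1 \<le> int s * (A t + 1)" by (simp add: mult.commute)
  ultimately show ?thesis by linarith
qed

lemma part1:
  assumes "arm_seq e A"
    and "y = Max ((\<lambda>t. real_of_int (A t) / real t) ` {1..n})"
  shows "\<forall>t\<in>{1..n}. A t = \<lfloor>y * real t\<rfloor>"
proof
  fix t assume t: "t \<in> {1..n}"
  have fin: "finite ((\<lambda>t. real_of_int (A t) / real t) ` {1..n})" by simp
  have ne: "(\<lambda>t. real_of_int (A t) / real t) ` {1..n} \<noteq> {}" using t by auto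
  obtain s where s: "s \<in> {1..n}" "y = real_of_int (A s) / real s"
    using Max_in[OF fin ne] assms(2) by auto
  have le: "real_of_int (A t) / real t \<le> y" using Max_ge[OF fin] t assms(2) by auto
  have t1: "t \<ge> 1" "s \<ge> 1" using t s by auto
  have k: "int t * A s < int s * (A t + 1)" using arm_key[OF assms(1) t1(2) t1(1)] .
  have tp: "real t > 0" "real s > 0" using t1 by auto
  have "real_of_int (A t) \<le> y * real t" using le tp by (simp add: divide_simps)
  moreover have "y * real t < real_of_int (A t) + 1"
  proof -
    have "real_of_int (int t * A s) < real_of_int (int s * (A t + 1))"
      using k by linarith
    then have "real t * real_of_int (A s) < real s * (real_of_int (A t) + 1)"
      by simp
    moreover have "(y * real t) * real s = real t * real_of_int (A s)"
      using s(2) tp by (simp add: field_simps)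
    moreover have "(real_of_int (A t) + 1) * real s = real s * (real_of_int (A t) + 1)"
      by (rule mult.commute)
    ultimately have "(y * real t) * real s < (real_of_int (A t) + 1) * real s"
      by linarith
    then show ?thesis using tp by (meson mult_less_cancel_right_pos)
  qed
  ultimately show "A t = \<lfloor>y * real t\<rfloor>" by (simp add: floor_unique)
qed

lemma hook_le:
  assumes "young D" "x \<in> D"
  shows "hook_len D x \<le> card D"
proof -
  obtain r c where x: "x = (r, c)" by (cases x)
  have fD: "finite D" using assms(1) unfolding young_def by blast
  define Ar where "Ar = {c'. (r, c') \<in> D \<and> c' > c}"
  define Lg where "Lg = {r'. (r', c) \<in> D \<and> r' > r}"
  define P1 where "P1 = (\<lambda>c'. (r, c')) ` Ar"
  define P2 where "P2 = (\<lambda>r'. (r', c)) ` Lg"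
  have s1: "P1 \<subseteq> D" "P2 \<subseteq> D" unfolding P1_def P2_def Ar_def Lg_def by auto
  have f1: "finite P1" "finite P2" using s1 fD finite_subset by auto
  have c1: "card P1 = card Ar" unfolding P1_def by (rule card_image) (auto simp: inj_on_def)
  have c2: "card P2 = card Lg" unfolding P2_def by (rule card_image) (auto simp: inj_on_def)
  have d: "P1 \<inter> P2 = {}" "x \<notin> P1" "x \<notin> P2"
    unfolding P1_def P2_def Ar_def Lg_def x by auto
  have "card (insert x (P1 \<union> P2)) = card P1 + card P2 + 1"
    using f1 d by (simp add: card_Un_disjoint)
  moreover have "insert x (P1 \<union> P2) \<subseteq> D" using s1 assms(2) by auto
  ultimately have "card P1 + card P2 + 1 \<le> card D" using card_mono[OF fD] by metis
  moreover have "hook_len D x = card Ar + card Lg + 1"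
    unfolding hook_len_def arm_len_def leg_len_def Ar_def Lg_def x by simp
  ultimately show ?thesis using c1 c2 by simp
qed

definition near :: "(nat \<times> nat) set \<Rightarrow> nat \<times> nat \<Rightarrow> bool" where
  "near D x \<longleftrightarrow> fst x \<ge> 1 \<and> snd x \<ge> 1 \<and>
     (\<forall>r' c'. 1 \<le> r' \<longrightarrow> r' \<le> fst x \<longrightarrow> 1 \<le> c' \<longrightarrow> c' \<le> snd x \<longrightarrow> (r', c') \<noteq> x \<longrightarrow> (r', c') \<in> D)"

lemma young_rect:
  assumes "young E" "(r, c) \<in> E"
  shows "1 \<le> r \<and> 1 \<le> c \<and> (\<forall>r' c'. 1 \<le> r' \<longrightarrow> r' \<le> r \<longrightarrow> 1 \<le> c' \<longrightarrow> c' \<le> c \<longrightarrow> (r', c') \<in> E)"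
  using assms unfolding young_def by blast

lemma addable_near: "addable D x \<Longrightarrow> near D x"
proof -
  assume a: "addable D x"
  obtain r c where x: "x = (r, c)" by (cases x)
  have y: "young (insert x D)" using a unfolding addable_def by blast
  have h: "1 \<le> r \<and> 1 \<le> c \<and> (\<forall>r' c'. 1 \<le> r' \<longrightarrow> r' \<le> r \<longrightarrow> 1 \<le> c' \<longrightarrow> c' \<le> c \<longrightarrow> (r', c') \<in> insert x D)"
    using young_rect[OF y, of r c] x by simp
  show ?thesis unfolding near_def x fst_conv snd_conv
  proof (intro conjI allI impI)
    show "1 \<le> r" "1 \<le> c" using h by auto
  next
    fix r' c' assume "1 \<le> r'" "r' \<le> r" "1 \<le> c'" "c' \<le> c" "(r', c') \<noteq> (r, c)"
    then show "(r', c') \<in> D" using h x by blast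
  qed
qed

lemma removable_near: "young D \<Longrightarrow> removable D x \<Longrightarrow> near D x"
proof -
  assume yD: "young D" and a: "removable D x"
  obtain r c where x: "x = (r, c)" by (cases x)
  have y: "young D" "x \<in> D" using yD a unfolding removable_def by blast+
  have h: "1 \<le> r \<and> 1 \<le> c \<and> (\<forall>r' c'. 1 \<le> r' \<longrightarrow> r' \<le> r \<longrightarrow> 1 \<le> c' \<longrightarrow> c' \<le> c \<longrightarrow> (r', c') \<in> D)"
    using young_rect[OF y(1), of r c] x y(2) by simp
  show ?thesis unfolding near_def x fst_conv snd_conv using h by blast
qed

lemma abs_aux:
  fixes r s c d M N K :: int
  assumes "M + N \<le> K + 3" "c \<le> M" "d \<le> M" "r \<le> N" "s \<le> N" "r\<ge>1" "s\<ge>1" "c\<ge>1" "d\<ge>1"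
  shows "\<bar>s - r + c - d\<bar> \<le> K + 1"
  using assms by linarith

lemma near_bound:
  assumes "young D" "near D (r, c)" "near D (s, d)"
  shows "\<bar>int s - int r + int c - int d\<bar> \<le> int (card D) + 1"
proof -
  have fD: "finite D" using assms(1) unfolding young_def by blast
  define M where "M = max c d"
  define N where "N = max r s"
  have ge: "r \<ge> 1" "c \<ge> 1" "s \<ge> 1" "d \<ge> 1" using assms(2,3) unfolding near_def by auto
  define S where "S = (\<lambda>j. (1::nat, j)) ` {1..M} \<union> (\<lambda>i. (i, 1::nat)) ` {2..N}"
  have cS: "card S = M + (N - 1)"
  proof -
    have "card ((\<lambda>j. (1::nat, j)) ` {1..M}) = M" by (subst card_image) (auto simp: inj_on_def)
    moreover have "card ((\<lambda>i. (i, 1::nat)) ` {2..N}) = N - 1" by (subst card_image) (auto simp: inj_on_def)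
    moreover have "(\<lambda>j. (1::nat, j)) ` {1..M} \<inter> (\<lambda>i. (i, 1::nat)) ` {2..N} = {}" by auto
    ultimately show ?thesis unfolding S_def by (simp add: card_Un_disjoint)
  qed
  have sub: "S - {(r, c), (s, d)} \<subseteq> D"
  proof
    fix z assume z: "z \<in> S - {(r, c), (s, d)}"
    then have zS: "z \<in> S" and zn: "z \<noteq> (r, c)" "z \<noteq> (s, d)" by auto
    have nx: "\<And>i j. 1 \<le> i \<Longrightarrow> i \<le> r \<Longrightarrow> 1 \<le> j \<Longrightarrow> j \<le> c \<Longrightarrow> (i, j) \<noteq> (r, c) \<Longrightarrow> (i, j) \<in> D"
      using assms(2) unfolding near_def by auto
    have ny: "\<And>i j. 1 \<le> i \<Longrightarrow> i \<le> s \<Longrightarrow> 1 \<le> j \<Longrightarrow> j \<le> d \<Longrightarrow> (i, j) \<noteq> (s, d) \<Longrightarrow> (i, j) \<in> D"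
      using assms(3) unfolding near_def by auto
    from zS consider j where "z = (1, j)" "1 \<le> j" "j \<le> M" | i where "z = (i, 1)" "2 \<le> i" "i \<le> N"
      unfolding S_def by auto
    then show "z \<in> D"
    proof cases
      case 1
      show ?thesis
      proof (cases "j \<le> c")
        case True then show ?thesis using 1 nx[of 1 j] ge zn by simp
      next
        case False then have "j \<le> d" using 1 unfolding M_def by auto
        then show ?thesis using 1 ny[of 1 j] ge zn by simp
      qed
    next
      case 2
      show ?thesis
      proof (cases "i \<le> r")
        case True then show ?thesis using 2 nx[of i 1] ge zn by simp
      next
        case False then have "i \<le> s" using 2 unfolding N_def by auto
        then show ?thesis using 2 ny[of i 1] ge zn by simp
      qed
    qed
  qed
  have "card S - card {(r, c), (s, d)} \<le> card (S - {(r, c), (s, d)})"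
    by (rule diff_card_le_card_Diff) simp
  moreover have "card (S - {(r, c), (s, d)}) \<le> card D" using card_mono[OF fD sub] .
  moreover have "card {(r, c), (s, d)} \<le> 2" by (simp add: card_insert_le_m1)
  ultimately have A1: "M + (N - 1) \<le> card D + 2" using cS by linarith
  have N1: "N \<ge> 1" using ge unfolding N_def by simp
  have h1: "int M + int N \<le> int (card D) + 3" using A1 N1 by linarith
  have h: "int c \<le> int M" "int d \<le> int M" "int r \<le> int N" "int s \<le> int N"
    unfolding M_def N_def by simp_all
  have g: "int r \<ge> 1" "int s \<ge> 1" "int c \<ge> 1" "int d \<ge> 1" using ge by auto
  show ?thesis by (rule abs_aux[OF h1 h g])
qed

lemma aext_agree:
  assumes ag: "\<forall>t\<in>{1..n}. A t = B t" and e: "e \<ge> 2" and m0: "(0::int) \<le> m"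
    and dv: "int e dvd m" and mb: "m \<le> int n * int e + 1"
  shows "Aext A (nat (m div int e)) = Aext B (nat (m div int e))"
proof -
  obtain q where q: "m = int e * q" using dv by (auto elim: dvdE)
  have ep: "int e > 0" using e by simp
  have mq: "m div int e = q" using q ep by simp
  have q0: "q \<ge> 0" using m0 q ep by (simp add: zero_le_mult_iff)
  have "int e * q < int e * (int n + 1)" using mb q e by (simp add: algebra_simps)
  then have "q < int n + 1" using ep by (simp add: mult_less_cancel_left_pos)
  then have qn: "nat q \<le> n" using q0 by linarith
  show ?thesis
  proof (cases "nat q = 0")
    case True then show ?thesis unfolding mq Aext_def by simp
  next
    case False then have "nat q \<in> {1..n}" using qn by simp
    then show ?thesis unfolding mq Aext_def using ag False by simp
  qed
qed

lemma prec_agree: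
  assumes ag: "\<forall>t\<in>{1..n}. A t = B t" and e: "e \<ge> 2" and yD: "young D"
    and cD: "card D \<le> n * e" and nx: "near D x" and ny: "near D y"
    and res: "residue e x = residue e y"
  shows "prec e A x y = prec e B x y"
proof -
  obtain r c where x: "x = (r, c)" by (cases x)
  obtain s d where y: "y = (s, d)" by (cases y)
  define k where "k = int s - int r + int c - int d"
  have kb: "\<bar>k\<bar> \<le> int (card D) + 1" unfolding k_def using near_bound[OF yD nx[unfolded x] ny[unfolded y]] .
  have cD': "int (card D) \<le> int n * int e" using cD by (metis of_nat_le_iff of_nat_mult)
  have kb2: "k \<le> int n * int e + 1" "- k \<le> int n * int e + 1" using kb cD' by linarith+
  have "(int c - int r) mod int e = (int d - int s) mod int e"
    using res unfolding residue_def x y by simp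
  then have "int e dvd (int c - int r) - (int d - int s)" by (simp add: mod_eq_dvd_iff)
  moreover have "(int c - int r) - (int d - int s) = k" unfolding k_def by simp
  ultimately have dv: "int e dvd k" by simp
  then have dv2: "int e dvd - k" by simp
  have h1: "k \<ge> 0 \<Longrightarrow> Aext A (nat (k div int e)) = Aext B (nat (k div int e))"
    using aext_agree[OF ag e _ dv kb2(1)] by simp
  have h2: "\<not> k \<ge> 0 \<Longrightarrow> Aext A (nat ((- k) div int e)) = Aext B (nat ((- k) div int e))"
    using aext_agree[OF ag e _ dv2 kb2(2)] by simp
  show ?thesis unfolding prec_def Let_def x y fst_conv snd_conv k_def[symmetric]
    using h1 h2 by (cases "k \<ge> 0") simp_all
qed

lemma regular_agree:
  assumes ag: "\<forall>t\<in>{1..n}. A t = B t" and e: "e \<ge> 2" and yD: "young D"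
    and cD: "card D \<le> n * e"
  shows "regular e A D = regular e B D"
proof -
  have "\<And>x t. x \<in> D \<Longrightarrow> t \<ge> 1 \<Longrightarrow> hook_len D x = e * t \<Longrightarrow> A t = B t"
  proof -
    fix x t assume a: "x \<in> D" "t \<ge> (1::nat)" "hook_len D x = e * t"
    have "e * t \<le> n * e" using hook_le[OF yD a(1)] a(3) cD by linarith
    then have "e * t \<le> e * n" by (simp add: mult.commute)
    moreover have "e > 0" using e by simp
    ultimately have "t \<le> n" by simp
    then show "A t = B t" using ag a(2) by simp
  qed
  then show ?thesis unfolding regular_def by metis
qed

lemma sorted_wrt_agree:
  "(\<And>x y. x \<in> set L \<Longrightarrow> y \<in> set L \<Longrightarrow> P x y = Q x y) \<Longrightarrow> sorted_wrt P L = sorted_wrt Q L"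
  by (induction L) auto

lemma sig_agree:
  assumes ag: "\<forall>t\<in>{1..n}. A t = B t" and e: "e \<ge> 2" and yD: "young D"
    and cD: "card D \<le> n * e"
  shows "sig_list e A D i L = sig_list e B D i L"
proof -
  have "set L = inodes e D i \<Longrightarrow> sorted_wrt (\<lambda>x y. prec e A y x) L = sorted_wrt (\<lambda>x y. prec e B y x) L"
  proof (rule sorted_wrt_agree)
    fix x y assume sL: "set L = inodes e D i" and xy: "x \<in> set L" "y \<in> set L"
    have near: "near D z" and rz: "residue e z = int i" if "z \<in> set L" for z
    proof -
      have h: "(addable D z \<or> removable D z) \<and> residue e z = int i"
        using that sL unfolding inodes_def by simp
      then show "residue e z = int i" by simp
      from h show "near D z" using addable_near removable_near[OF yD] by blast
    qed
    show "prec e A y x = prec e B y x"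
      by (rule prec_agree[OF ag e yD cD near[OF xy(2)] near[OF xy(1)]]) (simp add: rz xy)
  qed
  then show ?thesis unfolding sig_list_def by blast
qed

lemma arrow_agree:
  assumes ag: "\<forall>t\<in>{1..n}. A t = B t" and e: "e \<ge> 2" and yD: "young D"
    and cD: "card D \<le> n * e"
  shows "crystal_arrow e A D i D' = crystal_arrow e B D i D'"
proof -
  have "\<And>L. sig_list e A D i L = sig_list e B D i L" using sig_agree[OF ag e yD cD] .
  then show ?thesis unfolding crystal_arrow_def by simp
qed

lemma trunc_agree:
  assumes ag: "\<forall>t\<in>{1..n}. A t = B t" and e: "e \<ge> 2"
  shows "crystal_trunc e A n = crystal_trunc e B n"
proof -
  have V: "{D. young D \<and> regular e A D \<and> card D \<le> n * e} = {D. young D \<and> regular e B D \<and> card D \<le> n * e}"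
    using regular_agree[OF ag e] by blast
  show ?thesis unfolding crystal_trunc_def Let_def V
    using arrow_agree[OF ag e] by auto
qed

theorem mainTheorem9:
  fixes e n :: nat and A :: "nat \<Rightarrow> int" and y :: real
  assumes "e \<ge> 3"
    and "arm_seq e A"
    and "y = Max ((\<lambda>t. real_of_int (A t) / real t) ` {1..n})"
  shows "(\<forall>t\<in>{1..n}. A t = \<lfloor>y * real t\<rfloor>) \<and>
         crystal_trunc e A n = crystal_trunc e (arm_floor y) n"
proof
  show p: "\<forall>t\<in>{1..n}. A t = \<lfloor>y * real t\<rfloor>" using part1[OF assms(2,3)] .
  have "\<forall>t\<in>{1..n}. A t = arm_floor y t" using p unfolding arm_floor_def by simp
  moreover have "e \<ge> 2" using assms(1) by simp
  ultimately show "crystal_trunc e A n = crystal_trunc e (arm_floor y) n" by (rule trunc_agree)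
qed

end
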